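(* Let $B$ be a unital $C^*$-algebra with a $*$-isomorphism $\psi:B\to M_n\otimes B$ satisfying $\psi(1)=I_n\otimes1$, let $A$ be a maximal abelian $*$-subalgebra of $B$, and let $\phi:A\to\mathbb{C}$ be a unital algebra homomorphism extended to a positive contraction $\phi:B\to\mathbb{C}$. Then for every $c\in C$ and $\epsilon>0$ there is $m\ge1$ such that $\|\kappa_m(\phi_m(c))-c\|<\epsilon$.
   Context: $M_n=M_n(\mathbb{C})$, identity $I_n$. Define $\psi_0=\mathrm{id}_B$, $\psi_{m+1}=(\mathrm{id}^{\otimes m}\otimes\psi)\circ\psi_m:B\to M_n^{\otimes(m+1)}\otimes B$. Define $\kappa_m:M_n^{\otimes m}\to B$ by $\kappa_m(x)=\psi_m^{-1}(x\otimes1)$ and let $C$ be the norm closure of $\bigcup_{m\ge1}\kappa_m(M_n^{\otimes m})$. For $m\ge1$, $\phi_m=(\mathrm{id}^{\otimes m}\otimes\phi)\circ\psi_m:B\to M_n^{\otimes m}$. *)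

theory Defs
  imports "HOL-Analysis.Analysis"
begin

class unital_cstar_algebra = real_normed_algebra_1 + banach +
  fixes cs_scale :: "complex \<Rightarrow> 'a \<Rightarrow> 'a"
    and cs_star :: "'a \<Rightarrow> 'a"
  assumes cs_scale_of_real: "cs_scale (complex_of_real r) x = scaleR r x"
    and cs_scale_add_right: "cs_scale a (x + y) = cs_scale a x + cs_scale a y"
    and cs_scale_add_left: "cs_scale (a + b) x = cs_scale a x + cs_scale b x"
    and cs_scale_scale: "cs_scale a (cs_scale b x) = cs_scale (a * b) x"
    and norm_cs_scale: "norm (cs_scale a x) = cmod a * norm x"
    and cs_scale_mult_left: "cs_scale a (x * y) = cs_scale a x * y"
    and cs_scale_mult_right: "cs_scale a (x * y) = x * cs_scale a y"
    and cs_star_star: "cs_star (cs_star x) = x"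
    and cs_star_add: "cs_star (x + y) = cs_star x + cs_star y"
    and cs_star_mult: "cs_star (x * y) = cs_star y * cs_star x"
    and cs_star_scale: "cs_star (cs_scale a x) = cs_scale (cnj a) (cs_star x)"
    and cstar_identity: "norm (cs_star x * x) = (norm x)\<^sup>2"

text \<open>An element of \<open>M_n^{\<otimes>m} \<otimes> X\<close> is represented as a matrix indexed by
  multi-indices (lists of length m with entries < n), i.e. a function
  \<open>nat list \<Rightarrow> nat list \<Rightarrow> X\<close> vanishing outside these index sets.
  Tensor factors are ordered left to right, the last list position being the
  rightmost M_n factor.\<close>

definition multi_idx :: "nat \<Rightarrow> nat \<Rightarrow> nat list set" where
  "multi_idx n m = {is. length is = m \<and> set is \<subseteq> {..<n}}"

definition tmats :: "nat \<Rightarrow> nat \<Rightarrow> (nat list \<Rightarrow> nat list \<Rightarrow> 'x::zero) set" where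
  "tmats n m = {x. \<forall>is js. x is js \<noteq> 0 \<longrightarrow> is \<in> multi_idx n m \<and> js \<in> multi_idx n m}"

text \<open>M_n(X) = M_n \<otimes> X as zero-padded functions nat \<Rightarrow> nat \<Rightarrow> X.\<close>
definition mats :: "nat \<Rightarrow> (nat \<Rightarrow> nat \<Rightarrow> 'x::zero) set" where
  "mats n = {x. \<forall>i j. x i j \<noteq> 0 \<longrightarrow> i < n \<and> j < n}"

definition star_iso_Mn :: "nat \<Rightarrow> ('b::unital_cstar_algebra \<Rightarrow> nat \<Rightarrow> nat \<Rightarrow> 'b) \<Rightarrow> bool" where
  "star_iso_Mn n \<psi> \<longleftrightarrow>
     bij_betw \<psi> UNIV (mats n) \<and>
     (\<forall>x y i j. \<psi> (x + y) i j = \<psi> x i j + \<psi> y i j) \<and>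
     (\<forall>a x i j. \<psi> (cs_scale a x) i j = cs_scale a (\<psi> x i j)) \<and>
     (\<forall>x y i j. \<psi> (x * y) i j = (\<Sum>k<n. \<psi> x i k * \<psi> y k j)) \<and>
     (\<forall>x i j. \<psi> (cs_star x) i j = cs_star (\<psi> x j i))"

text \<open>\<open>\<psi>_0 = id\<close>, \<open>\<psi>_{m+1} = (id^{\<otimes>m} \<otimes> \<psi>) \<circ> \<psi>_m\<close>.\<close>
fun psi_pow :: "('b::unital_cstar_algebra \<Rightarrow> nat \<Rightarrow> nat \<Rightarrow> 'b) \<Rightarrow> nat \<Rightarrow> 'b \<Rightarrow> nat list \<Rightarrow> nat list \<Rightarrow> 'b" where
  "psi_pow \<psi> 0 b is js = (if is = [] \<and> js = [] then b else 0)"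
| "psi_pow \<psi> (Suc m) b is js =
     (if length is = Suc m \<and> length js = Suc m
      then \<psi> (psi_pow \<psi> m b (butlast is) (butlast js)) (last is) (last js) else 0)"

text \<open>\<open>\<kappa>_m(x) = \<psi>_m^{-1}(x \<otimes> 1)\<close> for \<open>x \<in> M_n^{\<otimes>m}\<close>.\<close>
definition kappa :: "('b::unital_cstar_algebra \<Rightarrow> nat \<Rightarrow> nat \<Rightarrow> 'b) \<Rightarrow> nat \<Rightarrow> (nat list \<Rightarrow> nat list \<Rightarrow> complex) \<Rightarrow> 'b" where
  "kappa \<psi> m x = inv_into UNIV (psi_pow \<psi> m) (\<lambda>is js. cs_scale (x is js) 1)"

definition Calg :: "nat \<Rightarrow> ('b::unital_cstar_algebra \<Rightarrow> nat \<Rightarrow> nat \<Rightarrow> 'b) \<Rightarrow> 'b set" where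
  "Calg n \<psi> = closure (\<Union>m\<in>{1..}. kappa \<psi> m ` tmats n m)"

text \<open>\<open>\<phi>_m = (id^{\<otimes>m} \<otimes> \<phi>) \<circ> \<psi>_m\<close>.\<close>
definition phi_pow :: "('b::unital_cstar_algebra \<Rightarrow> nat \<Rightarrow> nat \<Rightarrow> 'b) \<Rightarrow> ('b \<Rightarrow> complex) \<Rightarrow> nat \<Rightarrow> 'b \<Rightarrow> nat list \<Rightarrow> nat list \<Rightarrow> complex" where
  "phi_pow \<psi> \<phi> m b = (\<lambda>is js. \<phi> (psi_pow \<psi> m b is js))"

definition star_subalgebra :: "'b::unital_cstar_algebra set \<Rightarrow> bool" where
  "star_subalgebra S \<longleftrightarrow> 0 \<in> S \<and>
     (\<forall>x\<in>S. \<forall>y\<in>S. x + y \<in> S \<and> x * y \<in> S) \<and>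
     (\<forall>a. \<forall>x\<in>S. cs_scale a x \<in> S) \<and> (\<forall>x\<in>S. cs_star x \<in> S)"

definition abelian :: "'b::unital_cstar_algebra set \<Rightarrow> bool" where
  "abelian S \<longleftrightarrow> (\<forall>x\<in>S. \<forall>y\<in>S. x * y = y * x)"

definition maximal_abelian_star_subalgebra :: "'b::unital_cstar_algebra set \<Rightarrow> bool" where
  "maximal_abelian_star_subalgebra A \<longleftrightarrow> star_subalgebra A \<and> abelian A \<and>
     (\<forall>S. star_subalgebra S \<and> abelian S \<and> A \<subseteq> S \<longrightarrow> S = A)"

text \<open>Positive elements of a C*-algebra are exactly those of the form \<open>x^* x\<close>.\<close>
definition positive_contraction :: "('b::unital_cstar_algebra \<Rightarrow> complex) \<Rightarrow> bool" where
  "positive_contraction \<phi> \<longleftrightarrow>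
     (\<forall>x y. \<phi> (x + y) = \<phi> x + \<phi> y) \<and> (\<forall>a x. \<phi> (cs_scale a x) = a * \<phi> x) \<and>
     (\<forall>x. \<phi> (cs_star x * x) \<in> \<real> \<and> Re (\<phi> (cs_star x * x)) \<ge> 0) \<and>
     (\<forall>x. cmod (\<phi> x) \<le> norm x)"

definition unital_hom_on :: "'b::unital_cstar_algebra set \<Rightarrow> ('b \<Rightarrow> complex) \<Rightarrow> bool" where
  "unital_hom_on A \<phi> \<longleftrightarrow> \<phi> 1 = 1 \<and>
     (\<forall>x\<in>A. \<forall>y\<in>A. \<phi> (x + y) = \<phi> x + \<phi> y \<and> \<phi> (x * y) = \<phi> x * \<phi> y) \<and>
     (\<forall>a. \<forall>x\<in>A. \<phi> (cs_scale a x) = a * \<phi> x)"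

end

theory Submission
  imports Defs "HOL-Computational_Algebra.Formal_Power_Series"
begin


lemma cs_scale_zero_left [simp]: "cs_scale 0 x = 0" for x :: "'a::unital_cstar_algebra"
  using cs_scale_of_real[of 0 x] by simp

lemma cs_scale_one_left [simp]: "cs_scale 1 x = x" for x :: "'a::unital_cstar_algebra"
  using cs_scale_of_real[of 1 x] by simp

lemma cs_scale_zero_right [simp]: "cs_scale a (0::'a::unital_cstar_algebra) = 0"
  using cs_scale_add_right[of a 0 0] by simp

lemma cs_scale_minus_right: "cs_scale a (- x) = - cs_scale a x" for x :: "'a::unital_cstar_algebra"
proof -
  have "cs_scale a x + cs_scale a (- x) = 0" using cs_scale_add_right[of a x "-x"] by simp
  then show ?thesis by (simp add: add_eq_0_iff)
qed

lemma cs_scale_diff_right: "cs_scale a (x - y) = cs_scale a x - cs_scale a y" for x :: "'a::unital_cstar_algebra"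
  using cs_scale_add_right[of a x "-y"] cs_scale_minus_right[of a y] by simp

lemma cs_scale_minus_left: "cs_scale (- a) x = - cs_scale a x" for x :: "'a::unital_cstar_algebra"
proof -
  have "cs_scale a x + cs_scale (- a) x = 0" using cs_scale_add_left[of a "-a" x] by simp
  then show ?thesis by (simp add: add_eq_0_iff)
qed

lemma cs_scale_sum_right: "cs_scale a (sum f S :: 'a::unital_cstar_algebra) = (\<Sum>i\<in>S. cs_scale a (f i))"
  by (induct S rule: infinite_finite_induct) (simp_all add: cs_scale_add_right)

lemma cs_scale_sum_left: "cs_scale (sum f S) (x::'a::unital_cstar_algebra) = (\<Sum>i\<in>S. cs_scale (f i) x)"
  by (induct S rule: infinite_finite_induct) (simp_all add: cs_scale_add_left)

lemma cs_star_zero [simp]: "cs_star (0::'a::unital_cstar_algebra) = 0"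
  using cs_star_add[of 0 0] by simp

lemma cs_star_minus: "cs_star (- x) = - cs_star x" for x :: "'a::unital_cstar_algebra"
proof -
  have "cs_star x + cs_star (- x) = 0" using cs_star_add[of x "-x"] by simp
  then show ?thesis by (simp add: add_eq_0_iff)
qed

lemma cs_star_diff: "cs_star (x - y) = cs_star x - cs_star y" for x :: "'a::unital_cstar_algebra"
  using cs_star_add[of x "-y"] cs_star_minus[of y] by simp

lemma cs_star_sum: "cs_star (sum f S :: 'a::unital_cstar_algebra) = (\<Sum>i\<in>S. cs_star (f i))"
  by (induct S rule: infinite_finite_induct) (simp_all add: cs_star_add)

lemma cs_star_one [simp]: "cs_star (1::'a::unital_cstar_algebra) = 1"
proof -
  have "cs_star 1 = cs_star 1 * cs_star (cs_star (1::'a))" by (metis cs_star_star mult.right_neutral)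
  also have "\<dots> = cs_star (cs_star 1 * 1)" by (rule cs_star_mult[symmetric])
  also have "\<dots> = 1" by (simp add: cs_star_star)
  finally show ?thesis .
qed

lemma norm_le_norm_cs_star: "norm x \<le> norm (cs_star x)" for x :: "'a::unital_cstar_algebra"
proof (cases "norm x = 0")
  case True then show ?thesis by simp
next
  case False
  then have pos: "norm x > 0" by simp
  have "(norm x)^2 = norm (cs_star x * x)" by (simp add: cstar_identity)
  also have "\<dots> \<le> norm (cs_star x) * norm x" by (rule norm_mult_ineq)
  finally have "norm x * norm x \<le> norm (cs_star x) * norm x" by (simp add: power2_eq_square)
  then show ?thesis using pos by simp
qed

lemma norm_cs_star [simp]: "norm (cs_star x) = norm x" for x :: "'a::unital_cstar_algebra"
  using norm_le_norm_cs_star[of x] norm_le_norm_cs_star[of "cs_star x"]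
  by (simp add: cs_star_star)

lemma cs_star_scaleR: "cs_star (scaleR r x) = scaleR r (cs_star x)" for x :: "'a::unital_cstar_algebra"
  using cs_star_scale[of "complex_of_real r" x] by (simp add: cs_scale_of_real)

lemma cs_star_power: "cs_star (x ^ k) = (cs_star x) ^ k" for x :: "'a::unital_cstar_algebra"
proof (induct k)
  case 0 then show ?case by simp
next
  case (Suc k)
  have "cs_star (x ^ Suc k) = cs_star (x * x ^ k)" by simp
  also have "\<dots> = cs_star (x ^ k) * cs_star x" by (simp add: cs_star_mult)
  also have "\<dots> = (cs_star x) ^ Suc k" using Suc by (simp add: power_commutes)
  finally show ?case .
qed

lemma scal_mult_left: "cs_scale a 1 * x = cs_scale a x" for x :: "'a::unital_cstar_algebra"
  using cs_scale_mult_left[of a 1 x] by simp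

lemma scal_mult_right: "x * cs_scale a 1 = cs_scale a x" for x :: "'a::unital_cstar_algebra"
  using cs_scale_mult_right[of a x 1] by simp

lemma scal_mult: "cs_scale a 1 * cs_scale b 1 = cs_scale (a * b) (1::'a::unital_cstar_algebra)"
  by (simp add: scal_mult_left cs_scale_scale)

lemma cs_star_scal: "cs_star (cs_scale a 1) = cs_scale (cnj a) (1::'a::unital_cstar_algebra)"
  by (simp add: cs_star_scale)

lemma bounded_linear_cs_star: "bounded_linear (cs_star :: 'a::unital_cstar_algebra \<Rightarrow> 'a)"
  by (rule bounded_linear_intro[of _ 1]) (simp_all add: cs_star_add cs_star_scaleR)

lemma sa_norm_sq: "cs_star h = h \<Longrightarrow> norm (h * h) = (norm h)^2" for h :: "'a::unital_cstar_algebra"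
  using cstar_identity[of h] by simp

lemma sa_norm_pow2: "cs_star h = h \<Longrightarrow> norm (h ^ (2 ^ k)) = norm h ^ (2 ^ k)" for h :: "'a::unital_cstar_algebra"
proof (induct k)
  case 0 then show ?case by simp
next
  case (Suc k)
  have sa: "cs_star (h ^ (2 ^ k)) = h ^ (2 ^ k)" using Suc by (simp add: cs_star_power)
  have "h ^ (2 ^ Suc k) = h ^ (2 ^ k) * h ^ (2 ^ k)"
    by (simp add: power_add[symmetric] mult_2)
  then have "norm (h ^ (2 ^ Suc k)) = (norm (h ^ (2 ^ k)))^2"
    using sa_norm_sq[OF sa] by simp
  also have "\<dots> = norm h ^ (2 ^ Suc k)" using Suc by (simp add: power_mult[symmetric] mult.commute)
  finally show ?case .
qed

definition sqc :: "nat \<Rightarrow> real" where "sqc k = (-1)^k * ((1/2) gchoose k)"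

lemma abs_half_gchoose: "\<bar>(1/2::real) gchoose k\<bar> \<le> 1"
proof (induct k)
  case 0 then show ?case by simp
next
  case (Suc k)
  have "(1/2::real) * ((1/2) gchoose k) = of_nat k * ((1/2) gchoose k) + of_nat (Suc k) * ((1/2) gchoose (Suc k))"
    by (rule gbinomial_mult_1)
  then have eq: "((1/2::real) gchoose (Suc k)) = ((1/2 - of_nat k) / of_nat (Suc k)) * ((1/2) gchoose k)"
    by (simp add: field_simps)
  have "\<bar>(1/2 - of_nat k) / of_nat (Suc k)\<bar> \<le> (1::real)"
    by (simp add: divide_le_eq_1 abs_le_iff)
  then have "\<bar>((1/2 - of_nat k) / of_nat (Suc k)) * ((1/2::real) gchoose k)\<bar> \<le> 1 * 1"
    unfolding abs_mult using Suc by (intro mult_mono) auto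
  then show ?case using eq by simp
qed

lemma abs_sqc: "\<bar>sqc k\<bar> \<le> 1"
  using abs_half_gchoose[of k] by (simp add: sqc_def abs_mult)

lemma sqc_conv: "(\<Sum>i\<le>k. sqc i * sqc (k - i)) = (if k = 0 then 1 else if k = 1 then -1 else 0)"
proof -
  have "(\<Sum>i\<le>k. sqc i * sqc (k - i)) = (\<Sum>i=0..k. (-1)^k * (((1/2::real) gchoose i) * ((1/2) gchoose (k - i))))"
    unfolding atMost_atLeast0
  proof (rule sum.cong)
    fix i assume "i \<in> {0..k}"
    then have "(-1::real)^i * (-1)^(k-i) = (-1)^k" by (simp add: power_add[symmetric])
    then show "sqc i * sqc (k - i) = (-1)^k * (((1/2::real) gchoose i) * ((1/2) gchoose (k - i)))"
      unfolding sqc_def by (metis (no_types, lifting) mult.assoc mult.left_commute)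
  qed simp
  also have "\<dots> = (-1)^k * ((1/2 + 1/2::real) gchoose k)"
    by (simp add: sum_distrib_left[symmetric] gbinomial_Vandermonde)
  also have "\<dots> = (-1)^k * (of_nat (1 choose k))"
    using binomial_gbinomial[of 1 k, where 'a=real] by simp
  also have "\<dots> = (if k = 0 then 1 else if k = 1 then -1 else 0)"
    by (cases k) (auto simp: binomial_eq_0)
  finally show ?thesis .
qed

lemma sa_sqrt:
  fixes h :: "'a::unital_cstar_algebra"
  assumes sa: "cs_star h = h" and nh: "norm h < 1"
  shows "\<exists>v. cs_star v = v \<and> cs_star v * v = 1 - h"
proof -
  define a where "a k = scaleR (sqc k) (h ^ k)" for k
  have bnd: "norm (a k) \<le> norm h ^ k" for k
  proof -
    have "norm (a k) = \<bar>sqc k\<bar> * norm (h ^ k)" by (simp add: a_def)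
    also have "\<dots> \<le> 1 * norm h ^ k"
      using abs_sqc[of k] norm_power_ineq[of h k] by (intro mult_mono) auto
    finally show ?thesis by simp
  qed
  have sn: "summable (\<lambda>k. norm (a k))"
    by (rule summable_comparison_test[of _ "\<lambda>k. norm h ^ k"])
       (use bnd nh in \<open>auto intro!: summable_geometric\<close>)
  have s: "summable a" using sn by (rule summable_norm_cancel)
  define v where "v = suminf a"
  have cp: "(\<lambda>k. \<Sum>i\<le>k. a i * a (k - i)) sums (v * v)"
    unfolding v_def by (rule Cauchy_product_sums[OF sn sn])
  have eq: "(\<lambda>k. \<Sum>i\<le>k. a i * a (k - i)) = (\<lambda>k. (if k = 0 then 1 else 0) + (if k = 1 then - h else 0))"
  proof
    fix k
    have "(\<Sum>i\<le>k. a i * a (k - i)) = (\<Sum>i\<le>k. scaleR (sqc i * sqc (k - i)) (h ^ k))"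
    proof (rule sum.cong)
      fix i assume "i \<in> {..k}"
      then have "h ^ i * h ^ (k - i) = h ^ k" by (simp add: power_add[symmetric])
      then show "a i * a (k - i) = scaleR (sqc i * sqc (k - i)) (h ^ k)"
        by (simp add: a_def)
    qed simp
    also have "\<dots> = scaleR (\<Sum>i\<le>k. sqc i * sqc (k - i)) (h ^ k)"
      by (simp add: scaleR_sum_left)
    also have "\<dots> = (if k = 0 then 1 else 0) + (if k = 1 then - h else 0)"
      by (simp add: sqc_conv)
    finally show "(\<Sum>i\<le>k. a i * a (k - i)) = (if k = 0 then 1 else 0) + (if k = 1 then - h else 0)" .
  qed
  have "(\<lambda>k. (if k = 0 then 1 else 0) + (if k = 1 then - h else 0)) sums (1 + - h)"
    by (intro sums_add) (use sums_single[of 0 "\<lambda>_. 1::'a"] sums_single[of 1 "\<lambda>_. - h"] in simp_all)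
  then have vv: "v * v = 1 - h" using cp eq sums_unique2 by fastforce
  have "cs_star v = (\<Sum>k. cs_star (a k))"
    unfolding v_def by (rule bounded_linear.suminf[OF bounded_linear_cs_star s])
  also have "\<dots> = v" unfolding v_def a_def
    by (simp add: cs_star_scaleR cs_star_power sa)
  finally have sv: "cs_star v = v" .
  show ?thesis using sv vv by auto
qed

definition posfun :: "('a::unital_cstar_algebra \<Rightarrow> complex) \<Rightarrow> bool" where
  "posfun \<Omega> \<longleftrightarrow> (\<forall>x y. \<Omega> (x + y) = \<Omega> x + \<Omega> y) \<and> (\<forall>a x. \<Omega> (cs_scale a x) = a * \<Omega> x) \<and>
     (\<forall>x. \<Omega> (cs_star x * x) \<in> \<real> \<and> Re (\<Omega> (cs_star x * x)) \<ge> 0) \<and> \<Omega> 1 = 1"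

lemma posfun_bound:
  fixes \<Omega> :: "'a::unital_cstar_algebra \<Rightarrow> complex"
  assumes p: "posfun \<Omega>"
  shows "cmod (\<Omega> x) \<le> 4 * norm x"
proof -
  have add: "\<Omega> (x + y) = \<Omega> x + \<Omega> y" for x y using p by (simp add: posfun_def)
  have scl: "\<Omega> (cs_scale a x) = a * \<Omega> x" for a x using p by (simp add: posfun_def)
  have pos: "\<Omega> (cs_star x * x) \<in> \<real>" "Re (\<Omega> (cs_star x * x)) \<ge> 0" for x using p by (simp_all add: posfun_def)
  have one: "\<Omega> 1 = 1" using p by (simp add: posfun_def)
  have zero: "\<Omega> 0 = 0" using add[of 0 0] by simp
  have minus: "\<Omega> (- x) = - \<Omega> x" for x using add[of x "-x"] zero by (simp add: add_eq_0_iff)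
  have diff: "\<Omega> (x - y) = \<Omega> x - \<Omega> y" for x y using add[of x "-y"] minus[of y] by simp
  have sR: "\<Omega> (scaleR r x) = of_real r * \<Omega> x" for r x
    using scl[of "complex_of_real r" x] by (simp add: cs_scale_of_real)
  have small: "cmod (\<Omega> h) \<le> 1" if sa: "cs_star h = h" and nh: "norm h < 1" for h
  proof -
    obtain v where "cs_star v * v = 1 - h" using sa_sqrt[OF sa nh] by blast
    then have a1: "1 - \<Omega> h \<in> \<real>" "Re (1 - \<Omega> h) \<ge> 0" using pos[of v] by (simp_all add: diff one)
    have "cs_star (- h) = - h" using sa by (simp add: cs_star_minus)
    moreover have "norm (- h) < 1" using nh by simp
    ultimately obtain w where "cs_star w * w = 1 - (- h)" using sa_sqrt by blast
    then have a2: "1 + \<Omega> h \<in> \<real>" "Re (1 + \<Omega> h) \<ge> 0" using pos[of w] by (simp_all add: add one)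
    have "\<Omega> h = 1 - (1 - \<Omega> h)" by simp
    then have r: "\<Omega> h \<in> \<real>" using a1(1) by (metis Reals_1 Reals_diff)
    then obtain t where t: "\<Omega> h = of_real t" by (auto elim: Reals_cases)
    show ?thesis using a1(2) a2(2) t by simp
  qed
  have sab: "cmod (\<Omega> h) \<le> 2 * norm h" if sa: "cs_star h = h" for h
  proof (cases "h = 0")
    case True then show ?thesis by (simp add: zero)
  next
    case False
    then have np: "norm h > 0" by simp
    define h' where "h' = scaleR (1 / (2 * norm h)) h"
    have "cs_star h' = h'" unfolding h'_def using sa by (simp add: cs_star_scaleR)
    moreover have "norm h' < 1" unfolding h'_def using np by simp
    ultimately have "cmod (\<Omega> h') \<le> 1" by (rule small)
    moreover have "cmod (\<Omega> h') = cmod (\<Omega> h) / (2 * norm h)"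
      unfolding h'_def sR using np by (simp add: norm_mult norm_divide)
    ultimately show ?thesis using np by (simp add: divide_le_eq)
  qed
  define h1 where "h1 = scaleR (1/2) (x + cs_star x)"
  define h2 where "h2 = cs_scale (- \<i>/2) (x - cs_star x)"
  have sa1: "cs_star h1 = h1" unfolding h1_def
    by (simp add: cs_star_scaleR cs_star_add cs_star_star add.commute)
  have sa2: "cs_star h2 = h2" unfolding h2_def
  proof -
    have "cs_star (cs_scale (- \<i>/2) (x - cs_star x)) = cs_scale (\<i>/2) (cs_star x - x)"
      by (simp add: cs_star_scale cs_star_diff cs_star_star)
    also have "\<dots> = cs_scale (\<i>/2) (- (x - cs_star x))" by simp
    also have "\<dots> = - cs_scale (\<i>/2) (x - cs_star x)" by (rule cs_scale_minus_right)
    also have "\<dots> = cs_scale (- (\<i>/2)) (x - cs_star x)" by (rule cs_scale_minus_left[symmetric])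
    also have "\<dots> = cs_scale (- \<i>/2) (x - cs_star x)" by simp
    finally show "cs_star (cs_scale (- \<i>/2) (x - cs_star x)) = cs_scale (- \<i>/2) (x - cs_star x)" .
  qed
  have n1: "norm h1 \<le> norm x" unfolding h1_def
    using norm_triangle_ineq[of x "cs_star x"] by simp
  have n2: "norm h2 \<le> norm x" unfolding h2_def
    using norm_triangle_ineq4[of x "cs_star x"] by (simp add: norm_cs_scale norm_divide)
  have "cs_scale \<i> h2 = cs_scale (complex_of_real (1/2)) (x - cs_star x)"
    unfolding h2_def by (simp add: cs_scale_scale)
  also have "\<dots> = scaleR (1/2) (x - cs_star x)" by (rule cs_scale_of_real)
  finally have i2: "cs_scale \<i> h2 = scaleR (1/2) (x - cs_star x)" .
  have s2: "(x + cs_star x) + (x - cs_star x) = scaleR 2 x" by (simp add: scaleR_2)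
  have "h1 + cs_scale \<i> h2 = scaleR (1/2) ((x + cs_star x) + (x - cs_star x))"
    unfolding h1_def i2 by (rule scaleR_add_right[symmetric])
  also have "\<dots> = x" unfolding s2 by simp
  finally have xd: "x = h1 + cs_scale \<i> h2" by simp
  have "\<Omega> x = \<Omega> h1 + \<i> * \<Omega> h2" by (subst xd) (simp add: add scl)
  then have "cmod (\<Omega> x) \<le> cmod (\<Omega> h1) + cmod (\<Omega> h2)"
    using norm_triangle_ineq[of "\<Omega> h1" "\<i> * \<Omega> h2"] by (simp add: norm_mult)
  also have "\<dots> \<le> 2 * norm h1 + 2 * norm h2" using sab[OF sa1] sab[OF sa2] by simp
  also have "\<dots> \<le> 4 * norm x" using n1 n2 by simp
  finally show ?thesis .
qed

section \<open>Finite matrices indexed by a finite set of multi-indices\<close>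

definition TM :: "nat list set \<Rightarrow> (nat list \<Rightarrow> nat list \<Rightarrow> 'x::zero) set" where
  "TM T = {x. \<forall>I J. x I J \<noteq> 0 \<longrightarrow> I \<in> T \<and> J \<in> T}"

lemma TM_zero: "X \<in> TM T \<Longrightarrow> I \<notin> T \<or> J \<notin> T \<Longrightarrow> X I J = 0"
  by (auto simp: TM_def)

lemma TM_I: "(\<And>I J. I \<notin> T \<or> J \<notin> T \<Longrightarrow> X I J = 0) \<Longrightarrow> X \<in> TM T"
  by (auto simp: TM_def)

definition mprod :: "nat list set \<Rightarrow> (nat list \<Rightarrow> nat list \<Rightarrow> complex) \<Rightarrow> (nat list \<Rightarrow> nat list \<Rightarrow> complex) \<Rightarrow> nat list \<Rightarrow> nat list \<Rightarrow> complex" where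
  "mprod T X Y = (\<lambda>I J. \<Sum>K\<in>T. X I K * Y K J)"

definition madj :: "(nat list \<Rightarrow> nat list \<Rightarrow> complex) \<Rightarrow> nat list \<Rightarrow> nat list \<Rightarrow> complex" where
  "madj X = (\<lambda>I J. cnj (X J I))"

fun mpow :: "nat list set \<Rightarrow> (nat list \<Rightarrow> nat list \<Rightarrow> complex) \<Rightarrow> nat \<Rightarrow> nat list \<Rightarrow> nat list \<Rightarrow> complex" where
  "mpow T X 0 = (\<lambda>I J. if I = J \<and> I \<in> T then 1 else 0)"
| "mpow T X (Suc k) = mprod T X (mpow T X k)"

definition mv :: "nat list set \<Rightarrow> (nat list \<Rightarrow> nat list \<Rightarrow> complex) \<Rightarrow> (nat list \<Rightarrow> complex) \<Rightarrow> nat list \<Rightarrow> complex" where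
  "mv T X \<eta> = (\<lambda>I. \<Sum>J\<in>T. X I J * \<eta> J)"

definition ns :: "nat list set \<Rightarrow> (nat list \<Rightarrow> complex) \<Rightarrow> real" where
  "ns T \<eta> = (\<Sum>I\<in>T. (cmod (\<eta> I))^2)"

definition ip :: "nat list set \<Rightarrow> (nat list \<Rightarrow> complex) \<Rightarrow> (nat list \<Rightarrow> complex) \<Rightarrow> complex" where
  "ip T \<zeta> \<eta> = (\<Sum>I\<in>T. cnj (\<zeta> I) * \<eta> I)"

definition bb :: "nat list set \<Rightarrow> (nat list \<Rightarrow> nat list \<Rightarrow> complex) \<Rightarrow> real \<Rightarrow> bool" where
  "bb T X c \<longleftrightarrow> (\<forall>\<zeta> \<eta>. cmod (ip T \<zeta> (mv T X \<eta>)) \<le> c * sqrt (ns T \<zeta>) * sqrt (ns T \<eta>))"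

definition opb :: "nat list set \<Rightarrow> (nat list \<Rightarrow> nat list \<Rightarrow> complex) \<Rightarrow> real \<Rightarrow> bool" where
  "opb T X s \<longleftrightarrow> (\<forall>\<eta>. ns T (mv T X \<eta>) \<le> s * ns T \<eta>)"

lemma cs_scale_diff_left: "cs_scale (a - b) x = cs_scale a x - cs_scale b (x::'a::unital_cstar_algebra)"
  using cs_scale_add_left[of "a - b" b x] by (simp add: eq_diff_eq)

lemma sum_delta_in1: "finite S \<Longrightarrow> a \<in> S \<Longrightarrow> (\<Sum>k\<in>S. (if k = a then f k else 0)) = f a"
  by (simp add: sum.delta)

lemma sum_delta_in2: "finite S \<Longrightarrow> a \<in> S \<Longrightarrow> (\<Sum>k\<in>S. (if a = k then f k else 0)) = f a"
  by (simp add: sum.delta')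

lemma ns_nonneg: "ns T \<eta> \<ge> 0"
  by (simp add: ns_def sum_nonneg)

lemma ip_self: "ip T \<zeta> \<zeta> = of_real (ns T \<zeta>)"
  unfolding ip_def ns_def of_real_sum
  by (rule sum.cong) (simp_all add: complex_norm_square[simplified] mult.commute)

lemma bb_adj:
  assumes "bb T X c" shows "bb T (madj X) c"
  unfolding bb_def
proof (intro allI)
  fix \<zeta> \<eta> :: "nat list \<Rightarrow> complex"
  have "ip T \<zeta> (mv T (madj X) \<eta>) = (\<Sum>I\<in>T. \<Sum>J\<in>T. cnj (\<zeta> I) * cnj (X J I) * \<eta> J)"
    by (simp add: ip_def mv_def madj_def sum_distrib_left mult.assoc)
  also have "\<dots> = (\<Sum>J\<in>T. \<Sum>I\<in>T. cnj (\<zeta> I) * cnj (X J I) * \<eta> J)"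
    by (rule sum.swap)
  also have "\<dots> = cnj (ip T \<eta> (mv T X \<zeta>))"
    by (simp add: ip_def mv_def sum_distrib_left mult_ac)
  finally have "cmod (ip T \<zeta> (mv T (madj X) \<eta>)) = cmod (ip T \<eta> (mv T X \<zeta>))" by simp
  also have "\<dots> \<le> c * sqrt (ns T \<eta>) * sqrt (ns T \<zeta>)" using assms by (simp add: bb_def)
  finally show "cmod (ip T \<zeta> (mv T (madj X) \<eta>)) \<le> c * sqrt (ns T \<zeta>) * sqrt (ns T \<eta>)"
    by (simp add: mult_ac)
qed

lemma bb_opb:
  assumes "bb T X c" shows "opb T X (c^2)"
  unfolding opb_def
proof
  fix \<eta>
  define \<zeta> where "\<zeta> = mv T X \<eta>"
  have "ns T \<zeta> = cmod (ip T \<zeta> (mv T X \<eta>))" unfolding \<zeta>_def ip_self using ns_nonneg by simp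
  also have "\<dots> \<le> c * sqrt (ns T \<zeta>) * sqrt (ns T \<eta>)" using assms by (simp add: bb_def)
  finally have le: "ns T \<zeta> \<le> c * sqrt (ns T \<zeta>) * sqrt (ns T \<eta>)" .
  show "ns T \<zeta> \<le> c^2 * ns T \<eta>"
  proof (cases "ns T \<zeta> = 0")
    case True then show ?thesis using ns_nonneg[of T \<eta>] by simp
  next
    case False
    then have pos: "sqrt (ns T \<zeta>) > 0" using ns_nonneg[of T \<zeta>] by simp
    have "sqrt (ns T \<zeta>) * sqrt (ns T \<zeta>) \<le> (c * sqrt (ns T \<eta>)) * sqrt (ns T \<zeta>)"
      using le ns_nonneg[of T \<zeta>] by (simp add: mult_ac)
    then have s: "sqrt (ns T \<zeta>) \<le> c * sqrt (ns T \<eta>)" using pos ns_nonneg[of T \<zeta>] by (metis mult_right_le_imp_le)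
    have "(sqrt (ns T \<zeta>))^2 \<le> (c * sqrt (ns T \<eta>))^2"
      by (rule power_mono[OF s]) (simp add: ns_nonneg)
    then show ?thesis using ns_nonneg[of T \<zeta>] ns_nonneg[of T \<eta>] by (simp add: power_mult_distrib)
  qed
qed

lemma mv_mprod:
  assumes "finite T"
  shows "mv T (mprod T X Y) \<eta> = mv T X (mv T Y \<eta>)"
proof
  fix I
  have "mv T (mprod T X Y) \<eta> I = (\<Sum>J\<in>T. \<Sum>K\<in>T. X I K * Y K J * \<eta> J)"
    by (simp add: mv_def mprod_def sum_distrib_right)
  also have "\<dots> = (\<Sum>K\<in>T. \<Sum>J\<in>T. X I K * Y K J * \<eta> J)" by (rule sum.swap)
  also have "\<dots> = mv T X (mv T Y \<eta>) I"
    by (simp add: mv_def sum_distrib_left mult.assoc)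
  finally show "mv T (mprod T X Y) \<eta> I = mv T X (mv T Y \<eta>) I" .
qed

lemma opb_mprod:
  assumes "finite T" "opb T X s" "opb T Y t" "s \<ge> 0"
  shows "opb T (mprod T X Y) (s * t)"
  unfolding opb_def
proof
  fix \<eta>
  have "ns T (mv T (mprod T X Y) \<eta>) = ns T (mv T X (mv T Y \<eta>))" by (simp add: mv_mprod assms(1))
  also have "\<dots> \<le> s * ns T (mv T Y \<eta>)" using assms(2) by (simp add: opb_def)
  also have "\<dots> \<le> s * (t * ns T \<eta>)" using assms(3,4) by (simp add: opb_def mult_left_mono)
  finally show "ns T (mv T (mprod T X Y) \<eta>) \<le> s * t * ns T \<eta>" by (simp add: mult.assoc)
qed

lemma opb_mpow:
  assumes "finite T" "opb T X s" "s \<ge> 0"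
  shows "opb T (mpow T X k) (s ^ k)"
proof (induct k)
  case 0
  have "mv T (mpow T X 0) \<eta> I = \<eta> I" if "I \<in> T" for \<eta> I
  proof -
    have "mv T (mpow T X 0) \<eta> I = (\<Sum>J\<in>T. if I = J then \<eta> J else 0)"
      unfolding mv_def by (rule sum.cong) (use that in auto)
    also have "\<dots> = \<eta> I" by (rule sum_delta_in2[OF assms(1) that])
    finally show ?thesis .
  qed
  then have "ns T (mv T (mpow T X 0) \<eta>) = ns T \<eta>" for \<eta>
    unfolding ns_def by (intro sum.cong) simp_all
  then show ?case by (simp add: opb_def)
next
  case (Suc k)
  then show ?case using opb_mprod[OF assms(1,2) Suc assms(3)] by simp
qed

lemma opb_entry:
  assumes "finite T" "opb T X s" "I \<in> T" "J \<in> T"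
  shows "(cmod (X I J))^2 \<le> s"
proof -
  define \<delta> where "\<delta> = (\<lambda>K. if K = J then 1 else 0 :: complex)"
  have "mv T X \<delta> I = (\<Sum>K\<in>T. if K = J then X I K else 0)"
    unfolding mv_def \<delta>_def by (rule sum.cong) auto
  then have mvd: "mv T X \<delta> I = X I J" using sum_delta_in1[OF assms(1,4)] by simp
  have "ns T \<delta> = (\<Sum>K\<in>T. if K = J then 1 else 0)"
    unfolding ns_def \<delta>_def by (rule sum.cong) auto
  then have nd: "ns T \<delta> = 1" using sum_delta_in1[OF assms(1,4), of "\<lambda>_. 1::real"] by simp
  have "(cmod (X I J))^2 = (cmod (mv T X \<delta> I))^2" by (simp add: mvd)
  also have "\<dots> \<le> ns T (mv T X \<delta>)" unfolding ns_def
    by (rule member_le_sum) (simp_all add: assms)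
  also have "\<dots> \<le> s * ns T \<delta>" using assms(2) by (simp add: opb_def)
  finally show ?thesis by (simp add: nd)
qed

lemma pow_trick:
  fixes a b C :: real
  assumes "a \<ge> 0" "b \<ge> 0" "\<And>j. a ^ (2 ^ Suc j) \<le> C * b ^ (2 ^ Suc j)"
  shows "a \<le> b"
proof (rule ccontr)
  assume "\<not> a \<le> b"
  then have ab: "a > b" by simp
  show False
  proof (cases "b = 0")
    case True
    then have "a ^ 2 \<le> 0" using assms(3)[of 0] by simp
    moreover have "a ^ 2 > 0" using ab True by simp
    ultimately show False by simp
  next
    case False
    then have bp: "b > 0" using assms(2) by simp
    define r where "r = a / b"
    have r1: "r > 1" using ab bp by (simp add: r_def)
    obtain k where k: "C < r ^ k" using real_arch_pow[OF r1] by blast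
    have k1: "k < 2 ^ k" by (rule less_exp)
    have k2: "(2::nat) ^ k \<le> 2 ^ Suc k" by simp
    have "r ^ k \<le> r ^ (2 ^ Suc k)"
      by (rule power_increasing) (use r1 k1 k2 in linarith)+
    also have "r ^ (2 ^ Suc k) = a ^ (2 ^ Suc k) / b ^ (2 ^ Suc k)"
      by (simp add: r_def power_divide)
    also have "\<dots> \<le> C" using assms(3)[of k] bp by (simp add: divide_le_eq)
    finally show False using k by simp
  qed
qed

locale mi =
  fixes T :: "nat list set" and P :: "'b::unital_cstar_algebra \<Rightarrow> nat list \<Rightarrow> nat list \<Rightarrow> 'b"
  assumes fin: "finite T" and ne: "T \<noteq> {}" and bij: "bij_betw P UNIV (TM T)"
    and padd: "\<And>x y I J. P (x + y) I J = P x I J + P y I J"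
    and pscl: "\<And>a x I J. P (cs_scale a x) I J = cs_scale a (P x I J)"
    and pmul: "\<And>x y I J. P (x * y) I J = (\<Sum>K\<in>T. P x I K * P y K J)"
    and pstar: "\<And>x I J. P (cs_star x) I J = cs_star (P x J I)"
    and pone: "\<And>I J. P 1 I J = (if I = J \<and> I \<in> T then 1 else 0)"
begin

lemma pinj: "(\<And>I J. P x I J = P y I J) \<Longrightarrow> x = y"
proof -
  assume "\<And>I J. P x I J = P y I J"
  then have "P x = P y" by (intro ext)
  then show "x = y" using bij unfolding bij_betw_def inj_def by blast
qed

lemma pTM: "P x \<in> TM T" using bij by (auto simp: bij_betw_def)

lemma pout: "I \<notin> T \<or> J \<notin> T \<Longrightarrow> P x I J = 0"
  using pTM TM_zero by blast

lemma pzero: "P 0 I J = 0" using padd[of 0 0 I J] by simp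

lemma pminus: "P (- x) I J = - P x I J"
  using padd[of x "-x" I J] pzero[of I J] by (simp add: add_eq_0_iff)

lemma pdiff: "P (x - y) I J = P x I J - P y I J"
  using padd[of x "-y" I J] pminus[of y I J] by simp

lemma psum: "P (sum f S) I J = (\<Sum>i\<in>S. P (f i) I J)"
  by (induct S rule: infinite_finite_induct) (simp_all add: pzero padd)

definition sc :: "(nat list \<Rightarrow> nat list \<Rightarrow> complex) \<Rightarrow> nat list \<Rightarrow> nat list \<Rightarrow> 'b" where
  "sc X = (\<lambda>I J. cs_scale (X I J) 1)"

definition kap :: "(nat list \<Rightarrow> nat list \<Rightarrow> complex) \<Rightarrow> 'b" where
  "kap X = inv_into UNIV P (sc X)"

lemma sc_TM: "X \<in> TM T \<Longrightarrow> sc X \<in> TM T"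
  by (rule TM_I) (simp add: sc_def TM_zero)

lemma P_kap: "X \<in> TM T \<Longrightarrow> P (kap X) = sc X"
  unfolding kap_def
  by (rule f_inv_into_f) (use bij sc_TM in \<open>auto simp: bij_betw_def\<close>)

lemma P_kap': "X \<in> TM T \<Longrightarrow> P (kap X) I J = cs_scale (X I J) 1"
  using P_kap by (simp add: sc_def)

lemma kap_eqI: "X \<in> TM T \<Longrightarrow> (\<And>I J. P y I J = cs_scale (X I J) 1) \<Longrightarrow> kap X = y"
  by (rule pinj) (simp add: P_kap')

lemma mprod_TM: "X \<in> TM T \<Longrightarrow> Y \<in> TM T \<Longrightarrow> mprod T X Y \<in> TM T"
  by (rule TM_I) (auto simp: mprod_def TM_zero)

lemma madj_TM: "X \<in> TM T \<Longrightarrow> madj X \<in> TM T"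
  by (rule TM_I) (auto simp: madj_def TM_zero)

lemma mpow_TM: "X \<in> TM T \<Longrightarrow> mpow T X k \<in> TM T"
  by (induct k) (auto intro: TM_I mprod_TM)

lemma kap_mult:
  assumes "X \<in> TM T" "Y \<in> TM T"
  shows "kap X * kap Y = kap (mprod T X Y)"
proof (rule sym, rule kap_eqI[OF mprod_TM[OF assms]])
  fix I J
  have "P (kap X * kap Y) I J = (\<Sum>K\<in>T. cs_scale (X I K) 1 * cs_scale (Y K J) 1)"
    by (simp add: pmul P_kap' assms)
  also have "\<dots> = cs_scale (mprod T X Y I J) 1"
    by (simp add: scal_mult mprod_def cs_scale_sum_left)
  finally show "P (kap X * kap Y) I J = cs_scale (mprod T X Y I J) 1" .
qed

lemma kap_star:
  assumes "X \<in> TM T"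
  shows "cs_star (kap X) = kap (madj X)"
  by (rule sym, rule kap_eqI[OF madj_TM[OF assms]])
     (simp add: pstar P_kap' assms cs_star_scal madj_def)

lemma kap_one: "kap (mpow T X 0) = 1"
  by (rule kap_eqI) (auto intro: TM_I simp: pone)

lemma kap_pow:
  assumes "X \<in> TM T"
  shows "kap X ^ k = kap (mpow T X k)"
proof (induct k)
  case 0 then show ?case using kap_one[of X] by simp
next
  case (Suc k)
  then show ?case by (simp add: kap_mult assms mpow_TM)
qed

lemma kap_diff:
  assumes "X \<in> TM T" "Y \<in> TM T"
  shows "kap (\<lambda>I J. X I J - Y I J) = kap X - kap Y"
  by (rule kap_eqI) (use assms in \<open>auto intro!: TM_I simp: TM_zero pdiff P_kap' cs_scale_diff_left\<close>)

definition unitm :: "nat list \<Rightarrow> nat list \<Rightarrow> nat list \<Rightarrow> nat list \<Rightarrow> complex" where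
  "unitm A B = (\<lambda>I J. if I = A \<and> J = B then 1 else 0)"

lemma unitm_TM: "A \<in> T \<Longrightarrow> B \<in> T \<Longrightarrow> unitm A B \<in> TM T"
  by (rule TM_I) (auto simp: unitm_def)

lemma kap_scale:
  assumes "X \<in> TM T"
  shows "kap (\<lambda>I J. c * X I J) = cs_scale c (kap X)"
  by (rule kap_eqI) (use assms in \<open>auto intro!: TM_I simp: TM_zero pscl P_kap' cs_scale_scale\<close>)

lemma double_sum_unitm:
  assumes "X \<in> TM T"
  shows "(\<Sum>A\<in>T. \<Sum>B\<in>T. X A B * unitm A B I J) = X I J"
proof (cases "I \<in> T \<and> J \<in> T")
  case True
  have "(\<Sum>B\<in>T. X A B * unitm A B I J) = (if A = I then X A J else 0)" for A
  proof -
    have "(\<Sum>B\<in>T. X A B * unitm A B I J) = (\<Sum>B\<in>T. if B = J then (if A = I then X A B else 0) else 0)"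
      by (rule sum.cong) (auto simp: unitm_def)
    also have "\<dots> = (if A = I then X A J else 0)" by (cases "A = I") (simp_all add: sum_delta_in1[OF fin] True)
    finally show ?thesis .
  qed
  then have "(\<Sum>A\<in>T. \<Sum>B\<in>T. X A B * unitm A B I J) = (\<Sum>A\<in>T. if A = I then X A J else 0)"
    by simp
  also have "\<dots> = X I J" by (rule sum_delta_in1[OF fin]) (use True in simp)
  finally show ?thesis .
next
  case False
  then have "X I J = 0" using assms TM_zero by blast
  moreover have "unitm A B I J = 0" if "A \<in> T" "B \<in> T" for A B
    using False that by (auto simp: unitm_def)
  ultimately show ?thesis by simp
qed

lemma kap_decomp:
  assumes "X \<in> TM T"
  shows "kap X = (\<Sum>A\<in>T. \<Sum>B\<in>T. cs_scale (X A B) (kap (unitm A B)))"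
proof (rule kap_eqI[OF assms])
  fix I J
  have "P (\<Sum>A\<in>T. \<Sum>B\<in>T. cs_scale (X A B) (kap (unitm A B))) I J
      = (\<Sum>A\<in>T. \<Sum>B\<in>T. cs_scale (X A B * unitm A B I J) 1)"
    by (simp add: psum pscl P_kap' unitm_TM cs_scale_scale)
  also have "\<dots> = cs_scale (\<Sum>A\<in>T. \<Sum>B\<in>T. X A B * unitm A B I J) 1"
    by (simp add: cs_scale_sum_left)
  also have "\<dots> = cs_scale (X I J) 1" by (simp add: double_sum_unitm assms)
  finally show "P (\<Sum>A\<in>T. \<Sum>B\<in>T. cs_scale (X A B) (kap (unitm A B))) I J = cs_scale (X I J) 1" .
qed

lemma norm_kap_unitm:
  assumes "A \<in> T" "B \<in> T"
  shows "norm (kap (unitm A B)) \<le> 1"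
proof -
  define e where "e = kap (unitm A B)"
  define f where "f = kap (unitm B B)"
  have m1: "mprod T (madj (unitm A B)) (unitm A B) = unitm B B"
  proof (intro ext)
    fix I J
    have "mprod T (madj (unitm A B)) (unitm A B) I J = (\<Sum>K\<in>T. if K = A then unitm B B I J else 0)"
      unfolding mprod_def madj_def by (rule sum.cong) (auto simp: unitm_def)
    then show "mprod T (madj (unitm A B)) (unitm A B) I J = unitm B B I J"
      using sum_delta_in1[OF fin assms(1)] by simp
  qed
  have m2: "mprod T (unitm B B) (unitm B B) = unitm B B"
  proof (intro ext)
    fix I J
    have "mprod T (unitm B B) (unitm B B) I J = (\<Sum>K\<in>T. if K = B then unitm B B I J else 0)"
      unfolding mprod_def by (rule sum.cong) (auto simp: unitm_def)
    then show "mprod T (unitm B B) (unitm B B) I J = unitm B B I J"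
      using sum_delta_in1[OF fin assms(2)] by simp
  qed
  have m3: "madj (unitm B B) = unitm B B"
    by (auto simp: madj_def unitm_def intro!: ext)
  have ee: "cs_star e * e = f" unfolding e_def f_def
    using assms by (simp add: kap_star unitm_TM kap_mult madj_TM m1)
  have ff: "cs_star f * f = f" unfolding f_def
    using assms by (simp add: kap_star unitm_TM kap_mult m3 m2)
  have "(norm f)^2 = norm f" using cstar_identity[of f] ff by simp
  then have nf: "norm f \<le> 1" by (auto simp: power2_eq_square)
  have "(norm e)^2 = norm f" using cstar_identity[of e] ee by simp
  then have "(norm e)^2 \<le> 1^2" using nf by simp
  then show ?thesis unfolding e_def by (rule power2_le_imp_le) simp
qed

lemma kap_norm:
  assumes "X \<in> TM T" "\<And>A B. A \<in> T \<Longrightarrow> B \<in> T \<Longrightarrow> cmod (X A B) \<le> r"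
  shows "norm (kap X) \<le> of_nat (card T) * of_nat (card T) * r"
proof -
  have "norm (kap X) \<le> (\<Sum>A\<in>T. \<Sum>B\<in>T. norm (cs_scale (X A B) (kap (unitm A B))))"
    unfolding kap_decomp[OF assms(1)]
    by (rule order_trans[OF norm_sum sum_mono]) (rule norm_sum)
  also have "\<dots> \<le> (\<Sum>A\<in>T. \<Sum>B\<in>T. r)"
  proof (intro sum_mono)
    fix A B assume "A \<in> T" "B \<in> T"
    moreover have "0 \<le> r" using assms(2)[OF \<open>A \<in> T\<close> \<open>B \<in> T\<close>] norm_ge_zero[of "X A B"] by linarith
    ultimately have "cmod (X A B) * norm (kap (unitm A B)) \<le> r * 1"
      using assms(2) norm_kap_unitm by (intro mult_mono) auto
    then show "norm (cs_scale (X A B) (kap (unitm A B))) \<le> r" by (simp add: norm_cs_scale)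
  qed
  also have "\<dots> = of_nat (card T) * of_nat (card T) * r" by simp
  finally show ?thesis .
qed

end

locale mip = mi T P for T :: "nat list set" and P :: "'b::unital_cstar_algebra \<Rightarrow> nat list \<Rightarrow> nat list \<Rightarrow> 'b" +
  fixes \<phi> :: "'b \<Rightarrow> complex"
  assumes fadd: "\<And>x y. \<phi> (x + y) = \<phi> x + \<phi> y"
    and fscl: "\<And>a x. \<phi> (cs_scale a x) = a * \<phi> x"
    and fpos: "\<And>x. \<phi> (cs_star x * x) \<in> \<real> \<and> Re (\<phi> (cs_star x * x)) \<ge> 0"
    and fone: "\<phi> 1 = 1"
begin

lemma fzero: "\<phi> 0 = 0" using fadd[of 0 0] by simp

lemma fminus: "\<phi> (- x) = - \<phi> x"
  using fadd[of x "-x"] fzero by (simp add: add_eq_0_iff)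

lemma fdiff: "\<phi> (x - y) = \<phi> x - \<phi> y"
  using fadd[of x "-y"] fminus[of y] by simp

lemma fsum: "\<phi> (sum f S) = (\<Sum>i\<in>S. \<phi> (f i))"
  by (induct S rule: infinite_finite_induct) (simp_all add: fzero fadd)

definition phiM :: "'b \<Rightarrow> nat list \<Rightarrow> nat list \<Rightarrow> complex" where
  "phiM d = (\<lambda>I J. \<phi> (P d I J))"

definition E :: "'b \<Rightarrow> 'b" where
  "E d = kap (phiM d)"

lemma phiM_TM: "phiM d \<in> TM T"
  by (rule TM_I) (simp add: phiM_def pout fzero)

definition I0 :: "nat list" where "I0 = (SOME I. I \<in> T)"

lemma I0_in: "I0 \<in> T"
  using ne some_in_eq unfolding I0_def by blast

definition Om :: "'b \<Rightarrow> complex" where "Om x = \<phi> (P x I0 I0)"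

lemma posfun_Om: "posfun Om"
  unfolding posfun_def
proof (intro conjI allI)
  fix x y show "Om (x + y) = Om x + Om y" by (simp add: Om_def padd fadd)
next
  fix a x show "Om (cs_scale a x) = a * Om x" by (simp add: Om_def pscl fscl)
next
  fix x
  have e: "Om (cs_star x * x) = (\<Sum>K\<in>T. \<phi> (cs_star (P x K I0) * P x K I0))"
    by (simp add: Om_def pmul pstar fsum)
  show "Om (cs_star x * x) \<in> \<real>" unfolding e using fpos by auto
  show "Re (Om (cs_star x * x)) \<ge> 0" unfolding e Re_sum using fpos by (auto intro: sum_nonneg)
next
  show "Om 1 = 1" by (simp add: Om_def pone I0_in fone)
qed

definition colm :: "(nat list \<Rightarrow> complex) \<Rightarrow> nat list \<Rightarrow> nat list \<Rightarrow> complex" where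
  "colm \<zeta> = (\<lambda>I J. if I \<in> T \<and> J = I0 then \<zeta> I else 0)"

lemma colm_TM: "colm \<zeta> \<in> TM T"
  by (rule TM_I) (auto simp: colm_def I0_in)

lemma colm_sq: "mprod T (madj (colm \<zeta>)) (colm \<zeta>) = (\<lambda>I J. of_real (ns T \<zeta>) * unitm I0 I0 I J)"
proof (intro ext)
  fix I J
  show "mprod T (madj (colm \<zeta>)) (colm \<zeta>) I J = of_real (ns T \<zeta>) * unitm I0 I0 I J"
  proof (cases "I = I0 \<and> J = I0")
    case True
    then have "mprod T (madj (colm \<zeta>)) (colm \<zeta>) I J = ip T \<zeta> \<zeta>"
      unfolding mprod_def madj_def colm_def ip_def by (intro sum.cong) auto
    then show ?thesis using True by (simp add: ip_self unitm_def)
  next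
    case False
    then have "mprod T (madj (colm \<zeta>)) (colm \<zeta>) I J = 0"
      unfolding mprod_def madj_def colm_def by (intro sum.neutral) auto
    then show ?thesis using False by (auto simp: unitm_def)
  qed
qed

lemma norm_colm: "norm (kap (colm \<zeta>)) \<le> sqrt (ns T \<zeta>)"
proof -
  let ?u = "kap (colm \<zeta>)"
  have "cs_star ?u * ?u = kap (\<lambda>I J. of_real (ns T \<zeta>) * unitm I0 I0 I J)"
    by (simp add: kap_star colm_TM kap_mult madj_TM colm_sq)
  also have "\<dots> = cs_scale (of_real (ns T \<zeta>)) (kap (unitm I0 I0))"
    by (rule kap_scale[OF unitm_TM[OF I0_in I0_in]])
  finally have "(norm ?u)^2 = ns T \<zeta> * norm (kap (unitm I0 I0))"
    using cstar_identity[of ?u] ns_nonneg[of T \<zeta>] by (simp add: norm_cs_scale)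
  also have "\<dots> \<le> ns T \<zeta> * 1"
    using norm_kap_unitm[OF I0_in I0_in] ns_nonneg[of T \<zeta>] by (intro mult_left_mono) auto
  finally have "(norm ?u)^2 \<le> ns T \<zeta>" by simp
  then show ?thesis by (rule real_le_rsqrt)
qed

lemma key_ip: "ip T \<zeta> (mv T (phiM d) \<eta>) = Om (cs_star (kap (colm \<zeta>)) * d * kap (colm \<eta>))"
proof -
  have Pu: "P (cs_star (kap (colm \<zeta>))) I0 L = (if L \<in> T then cs_scale (cnj (\<zeta> L)) 1 else 0)" for L
    unfolding pstar P_kap'[OF colm_TM] by (simp add: colm_def I0_in cs_star_scal)
  have Pw: "P (kap (colm \<eta>)) K I0 = (if K \<in> T then cs_scale (\<eta> K) 1 else 0)" for K
    unfolding P_kap'[OF colm_TM] by (simp add: colm_def)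
  have "P (cs_star (kap (colm \<zeta>)) * d * kap (colm \<eta>)) I0 I0
      = (\<Sum>K\<in>T. (\<Sum>L\<in>T. P (cs_star (kap (colm \<zeta>))) I0 L * P d L K) * P (kap (colm \<eta>)) K I0)"
    by (simp add: pmul)
  also have "\<dots> = (\<Sum>K\<in>T. \<Sum>L\<in>T. cs_scale (cnj (\<zeta> L) * \<eta> K) (P d L K))"
  proof (rule sum.cong[OF refl])
    fix K assume K: "K \<in> T"
    show "(\<Sum>L\<in>T. P (cs_star (kap (colm \<zeta>))) I0 L * P d L K) * P (kap (colm \<eta>)) K I0
        = (\<Sum>L\<in>T. cs_scale (cnj (\<zeta> L) * \<eta> K) (P d L K))"
      unfolding sum_distrib_right
    proof (rule sum.cong[OF refl])
      fix L assume L: "L \<in> T"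
      have "P (cs_star (kap (colm \<zeta>))) I0 L * P d L K * P (kap (colm \<eta>)) K I0
          = cs_scale (cnj (\<zeta> L)) 1 * P d L K * cs_scale (\<eta> K) 1" using K L by (simp add: Pu Pw)
      also have "\<dots> = cs_scale (\<eta> K) (cs_scale (cnj (\<zeta> L)) (P d L K))"
        by (simp add: scal_mult_left scal_mult_right)
      also have "\<dots> = cs_scale (cnj (\<zeta> L) * \<eta> K) (P d L K)"
        by (simp add: cs_scale_scale mult.commute)
      finally show "P (cs_star (kap (colm \<zeta>))) I0 L * P d L K * P (kap (colm \<eta>)) K I0
          = cs_scale (cnj (\<zeta> L) * \<eta> K) (P d L K)" .
    qed
  qed
  finally have o: "Om (cs_star (kap (colm \<zeta>)) * d * kap (colm \<eta>)) = (\<Sum>K\<in>T. \<Sum>L\<in>T. cnj (\<zeta> L) * \<eta> K * \<phi> (P d L K))"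
    by (simp add: Om_def fsum fscl)
  have "ip T \<zeta> (mv T (phiM d) \<eta>) = (\<Sum>L\<in>T. \<Sum>K\<in>T. cnj (\<zeta> L) * \<eta> K * \<phi> (P d L K))"
    by (simp add: ip_def mv_def phiM_def sum_distrib_left mult_ac)
  also have "\<dots> = (\<Sum>K\<in>T. \<Sum>L\<in>T. cnj (\<zeta> L) * \<eta> K * \<phi> (P d L K))" by (rule sum.swap)
  finally show ?thesis using o by simp
qed

lemma bb_phiM: "bb T (phiM d) (4 * norm d)"
  unfolding bb_def
proof (intro allI)
  fix \<zeta> \<eta>
  let ?u = "kap (colm \<zeta>)" and ?w = "kap (colm \<eta>)"
  have "cmod (ip T \<zeta> (mv T (phiM d) \<eta>)) = cmod (Om (cs_star ?u * d * ?w))" by (simp add: key_ip)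
  also have "\<dots> \<le> 4 * norm (cs_star ?u * d * ?w)" by (rule posfun_bound[OF posfun_Om])
  also have "norm (cs_star ?u * d * ?w) \<le> norm ?u * norm d * norm ?w"
  proof -
    have "norm (cs_star ?u * d * ?w) \<le> norm (cs_star ?u * d) * norm ?w" by (rule norm_mult_ineq)
    also have "\<dots> \<le> (norm ?u * norm d) * norm ?w"
      using norm_mult_ineq[of "cs_star ?u" d] by (intro mult_right_mono) auto
    finally show ?thesis .
  qed
  also have "norm ?u * norm d * norm ?w \<le> sqrt (ns T \<zeta>) * norm d * sqrt (ns T \<eta>)"
    using norm_colm[of \<zeta>] norm_colm[of \<eta>] ns_nonneg[of T \<zeta>] ns_nonneg[of T \<eta>]
    by (intro mult_mono) auto
  finally show "cmod (ip T \<zeta> (mv T (phiM d) \<eta>)) \<le> 4 * norm d * sqrt (ns T \<zeta>) * sqrt (ns T \<eta>)"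
    by (simp add: mult_ac)
qed

lemma E_bound: "norm (E d) \<le> 4 * norm d"
proof -
  define \<Phi> where "\<Phi> = phiM d"
  define D where "D = norm d"
  define s where "s = (4 * D)^2"
  have s0: "s \<ge> 0" by (simp add: s_def)
  have T\<Phi>: "\<Phi> \<in> TM T" by (simp add: \<Phi>_def phiM_TM)
  have o1: "opb T \<Phi> s" unfolding s_def \<Phi>_def D_def by (rule bb_opb[OF bb_phiM])
  have o2: "opb T (madj \<Phi>) s" unfolding s_def \<Phi>_def D_def by (rule bb_opb[OF bb_adj[OF bb_phiM]])
  define H where "H = mprod T (madj \<Phi>) \<Phi>"
  have TH: "H \<in> TM T" by (simp add: H_def mprod_TM madj_TM T\<Phi>)
  have oH: "opb T H (s * s)" unfolding H_def by (rule opb_mprod[OF fin o2 o1 s0])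
  define y where "y = E d"
  have yy: "cs_star y * y = kap H"
    by (simp add: y_def E_def \<Phi>_def[symmetric] kap_star T\<Phi> kap_mult madj_TM H_def)
  have sa: "cs_star (cs_star y * y) = cs_star y * y" by (simp add: cs_star_mult cs_star_star)
  have bound: "norm ((cs_star y * y) ^ k) \<le> of_nat (card T) * of_nat (card T) * s ^ k" for k
  proof -
    have eq: "(cs_star y * y) ^ k = kap (mpow T H k)" by (simp add: yy kap_pow TH)
    have ent: "cmod (mpow T H k A B) \<le> s ^ k" if "A \<in> T" "B \<in> T" for A B
    proof -
      have "(cmod (mpow T H k A B))^2 \<le> (s * s)^k"
        by (rule opb_entry[OF fin opb_mpow[OF fin oH] that]) (simp add: s0)
      also have "\<dots> = (s^k)^2" by (simp add: power2_eq_square power_mult_distrib)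
      finally show ?thesis by (rule power2_le_imp_le) (simp add: s0)
    qed
    show ?thesis unfolding eq by (rule kap_norm[OF mpow_TM[OF TH] ent])
  qed
  have "norm y \<le> 4 * D"
  proof (rule pow_trick[of _ _ "of_nat (card T) * of_nat (card T)"])
    fix j
    have "norm y ^ (2 ^ Suc j) = (norm y ^ 2) ^ (2 ^ j)" by (simp add: power_mult[symmetric])
    also have "\<dots> = norm (cs_star y * y) ^ (2 ^ j)" by (simp add: cstar_identity)
    also have "\<dots> = norm ((cs_star y * y) ^ (2 ^ j))" by (rule sa_norm_pow2[OF sa, symmetric])
    also have "\<dots> \<le> of_nat (card T) * of_nat (card T) * s ^ (2 ^ j)" by (rule bound)
    also have "s ^ (2 ^ j) = (4 * D) ^ (2 ^ Suc j)" by (simp only: s_def power_mult[symmetric] power_Suc)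
    finally show "norm y ^ (2 ^ Suc j) \<le> of_nat (card T) * of_nat (card T) * (4 * D) ^ (2 ^ Suc j)" .
  qed (simp_all add: D_def)
  then show ?thesis by (simp add: y_def D_def)
qed

lemma phiM_diff: "phiM (x - y) = (\<lambda>I J. phiM x I J - phiM y I J)"
  by (simp add: phiM_def pdiff fdiff)

lemma E_diff: "E (x - y) = E x - E y"
  by (simp add: E_def phiM_diff kap_diff phiM_TM)

lemma E_kap: "X \<in> TM T \<Longrightarrow> E (kap X) = kap X"
proof -
  assume X: "X \<in> TM T"
  have "phiM (kap X) = X" by (intro ext) (simp add: phiM_def P_kap' X fscl fone)
  then show ?thesis by (simp add: E_def)
qed

end

lemma snoc_in: "I @ [i] \<in> multi_idx n (Suc m) \<longleftrightarrow> I \<in> multi_idx n m \<and> i < n"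
  by (auto simp: multi_idx_def)

lemma len_not_in: "length I \<noteq> m \<Longrightarrow> I \<notin> multi_idx n m"
  by (auto simp: multi_idx_def)

lemma finite_multi_idx: "finite (multi_idx n m)"
proof -
  have "multi_idx n m = {xs. set xs \<subseteq> {..<n} \<and> length xs = m}" by (auto simp: multi_idx_def)
  then show ?thesis using finite_lists_length_eq[OF finite_lessThan[of n], of m] by simp
qed

lemma multi_idx_ne: "n > 0 \<Longrightarrow> multi_idx n m \<noteq> {}"
proof -
  assume "n > 0"
  then have "replicate m 0 \<in> multi_idx n m" by (auto simp: multi_idx_def)
  then show ?thesis by blast
qed

lemma multi_idx_Suc_img: "multi_idx n (Suc m) = (\<lambda>(I, i). I @ [i]) ` (multi_idx n m \<times> {..<n})"
proof
  show "multi_idx n (Suc m) \<subseteq> (\<lambda>(I, i). I @ [i]) ` (multi_idx n m \<times> {..<n})"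
  proof
    fix I' assume I': "I' \<in> multi_idx n (Suc m)"
    then have "I' \<noteq> []" by (auto simp: multi_idx_def)
    then have eq: "I' = butlast I' @ [last I']" by simp
    then have "butlast I' \<in> multi_idx n m \<and> last I' < n" using I' snoc_in by metis
    then show "I' \<in> (\<lambda>(I, i). I @ [i]) ` (multi_idx n m \<times> {..<n})"
      using eq by (auto intro!: image_eqI[where x = "(butlast I', last I')"])
  qed
next
  show "(\<lambda>(I, i). I @ [i]) ` (multi_idx n m \<times> {..<n}) \<subseteq> multi_idx n (Suc m)"
    using snoc_in by auto
qed

lemma sum_multi_idx_Suc:
  "(\<Sum>K\<in>multi_idx n (Suc m). f K) = (\<Sum>K\<in>multi_idx n m. \<Sum>k<n. f (K @ [k]))"
proof -
  have inj: "inj_on (\<lambda>(I, i). I @ [i]) (multi_idx n m \<times> {..<n})"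
    by (auto simp: inj_on_def)
  have "(\<Sum>K\<in>multi_idx n (Suc m). f K) = (\<Sum>p\<in>multi_idx n m \<times> {..<n}. f ((\<lambda>(I, i). I @ [i]) p))"
    unfolding multi_idx_Suc_img by (subst sum.reindex[OF inj]) (simp add: o_def)
  also have "\<dots> = (\<Sum>K\<in>multi_idx n m. \<Sum>k<n. f (K @ [k]))"
    by (simp add: sum.cartesian_product split_beta)
  finally show ?thesis .
qed

lemma snoc_cases:
  assumes "\<And>I i. I' = I @ [i] \<Longrightarrow> length I = m \<Longrightarrow> Q" and "length I' \<noteq> Suc m \<Longrightarrow> Q"
  shows Q
proof (cases "length I' = Suc m")
  case True
  then have "I' \<noteq> []" by auto
  then have "I' = butlast I' @ [last I']" by simp
  moreover have "length (butlast I') = m" using True by simp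
  ultimately show Q by (rule assms(1))
next
  case False then show Q by (rule assms(2))
qed

lemma psi_pow_ev: "length I = m \<Longrightarrow> length J = m \<Longrightarrow> psi_pow \<psi> (Suc m) b (I @ [i]) (J @ [j]) = \<psi> (psi_pow \<psi> m b I J) i j"
  by simp

lemma psi_pow_out: "length I' \<noteq> Suc m \<or> length J' \<noteq> Suc m \<Longrightarrow> psi_pow \<psi> (Suc m) b I' J' = 0"
  by auto

lemma psi_pow_mi:
  fixes \<psi> :: "'b::unital_cstar_algebra \<Rightarrow> nat \<Rightarrow> nat \<Rightarrow> 'b"
  assumes iso: "star_iso_Mn n \<psi>" and one: "\<And>i j. \<psi> 1 i j = (if i = j \<and> i < n then 1 else 0)"
    and n: "n > 0"
  shows "mi (multi_idx n m) (psi_pow \<psi> m)"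
proof -
  have bij\<psi>: "bij_betw \<psi> UNIV (mats n)" using iso by (simp add: star_iso_Mn_def)
  have \<psi>add: "\<psi> (x + y) i j = \<psi> x i j + \<psi> y i j" for x y i j using iso by (simp add: star_iso_Mn_def)
  have \<psi>scl: "\<psi> (cs_scale a x) i j = cs_scale a (\<psi> x i j)" for a x i j using iso by (simp add: star_iso_Mn_def)
  have \<psi>mul: "\<psi> (x * y) i j = (\<Sum>k<n. \<psi> x i k * \<psi> y k j)" for x y i j using iso by (simp add: star_iso_Mn_def)
  have \<psi>star: "\<psi> (cs_star x) i j = cs_star (\<psi> x j i)" for x i j using iso by (simp add: star_iso_Mn_def)
  have \<psi>0: "\<psi> 0 i j = 0" for i j using \<psi>add[of 0 0 i j] by simp
  have \<psi>sum: "\<psi> (sum f S) i j = (\<Sum>s\<in>S. \<psi> (f s) i j)" for f :: "'c \<Rightarrow> 'b" and S i j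
    by (induct S rule: infinite_finite_induct) (simp_all add: \<psi>0 \<psi>add)
  have \<psi>out: "\<psi> x i j \<noteq> 0 \<Longrightarrow> i < n \<and> j < n" for x i j
    using bij\<psi> by (auto simp: bij_betw_def mats_def)
  have \<psi>inj: "\<psi> x = \<psi> y \<Longrightarrow> x = y" for x y
    using bij\<psi> by (auto simp: bij_betw_def inj_def)
  show ?thesis
  proof (induct m)
    case 0
    let ?P = "psi_pow \<psi> 0"
    have T0: "multi_idx n 0 = {[]}" by (auto simp: multi_idx_def)
    show ?case unfolding T0
    proof (rule mi.intro)
      show "finite {[]::nat list}" by simp
      show "{[]::nat list} \<noteq> {}" by simp
      show "?P (x + y) I J = ?P x I J + ?P y I J" for x y I J by simp
      show "?P (cs_scale a x) I J = cs_scale a (?P x I J)" for a x I J by simp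
      show "?P (x * y) I J = (\<Sum>K\<in>{[]}. ?P x I K * ?P y K J)" for x y I J by simp
      show "?P (cs_star x) I J = cs_star (?P x J I)" for x I J by simp
      show "?P 1 I J = (if I = J \<and> I \<in> {[]} then 1 else 0)" for I J by auto
      show "bij_betw ?P UNIV (TM {[]})"
        unfolding bij_betw_def
      proof
        show "inj ?P"
        proof (rule injI)
          fix x y assume "?P x = ?P y"
          then have "?P x [] [] = ?P y [] []" by simp
          then show "x = y" by simp
        qed
        show "range ?P = TM {[]}"
        proof
          show "range ?P \<subseteq> TM {[]}" by (auto simp: TM_def split: if_splits)
          show "TM {[]} \<subseteq> range ?P"
          proof
            fix X :: "nat list \<Rightarrow> nat list \<Rightarrow> 'b" assume X: "X \<in> TM {[]}"
            have "X = ?P (X [] [])"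
              by (intro ext) (use X in \<open>auto simp: TM_zero\<close>)
            then show "X \<in> range ?P" by blast
          qed
        qed
      qed
    qed
  next
    case (Suc m)
    interpret IH: mi "multi_idx n m" "psi_pow \<psi> m" by (rule Suc)
    let ?T = "multi_idx n m" and ?P = "psi_pow \<psi> m"
    let ?T' = "multi_idx n (Suc m)" and ?P' = "psi_pow \<psi> (Suc m)"
    have lenT: "I \<in> ?T \<Longrightarrow> length I = m" for I by (simp add: multi_idx_def)
    show ?case
    proof (rule mi.intro)
      show "finite ?T'" by (rule finite_multi_idx)
      show "?T' \<noteq> {}" using n by (rule multi_idx_ne)
      show "?P' (x + y) I' J' = ?P' x I' J' + ?P' y I' J'" for x y I' J'
      proof (rule snoc_cases[of I' m])
        fix I i assume I: "I' = I @ [i]" "length I = m"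
        show ?thesis
        proof (rule snoc_cases[of J' m])
          fix J j assume J: "J' = J @ [j]" "length J = m"
          show ?thesis using I J by (simp add: IH.padd \<psi>add)
        qed (simp add: psi_pow_out)
      qed (simp add: psi_pow_out)
      show "?P' (cs_scale a x) I' J' = cs_scale a (?P' x I' J')" for a x I' J'
      proof (rule snoc_cases[of I' m])
        fix I i assume I: "I' = I @ [i]" "length I = m"
        show ?thesis
        proof (rule snoc_cases[of J' m])
          fix J j assume J: "J' = J @ [j]" "length J = m"
          show ?thesis using I J by (simp add: IH.pscl \<psi>scl)
        qed (simp add: psi_pow_out)
      qed (simp add: psi_pow_out)
      show "?P' (cs_star x) I' J' = cs_star (?P' x J' I')" for x I' J'
      proof (rule snoc_cases[of I' m])
        fix I i assume I: "I' = I @ [i]" "length I = m"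
        show ?thesis
        proof (rule snoc_cases[of J' m])
          fix J j assume J: "J' = J @ [j]" "length J = m"
          show ?thesis using I J by (simp add: IH.pstar \<psi>star)
        qed (simp add: psi_pow_out)
      qed (simp add: psi_pow_out)
      show "?P' 1 I' J' = (if I' = J' \<and> I' \<in> ?T' then 1 else 0)" for I' J'
      proof (rule snoc_cases[of I' m])
        fix I i assume I: "I' = I @ [i]" "length I = m"
        show ?thesis
        proof (rule snoc_cases[of J' m])
          fix J j assume J: "J' = J @ [j]" "length J = m"
          show ?thesis using I J by (auto simp: IH.pone one \<psi>0 snoc_in)
        qed (use I in \<open>auto simp: psi_pow_out len_not_in\<close>)
      qed (auto simp: psi_pow_out len_not_in)
      show "?P' (x * y) I' J' = (\<Sum>K'\<in>?T'. ?P' x I' K' * ?P' y K' J')" for x y I' J'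
      proof (cases "length I' = Suc m \<and> length J' = Suc m")
        case False
        then have "?P' x I' K' * ?P' y K' J' = 0" for K' by (auto simp: psi_pow_out)
        moreover have "?P' (x * y) I' J' = 0" by (rule psi_pow_out) (use False in blast)
        ultimately show ?thesis by simp
      next
        case True
        obtain I i where I: "I' = I @ [i]" "length I = m"
          using True by (metis snoc_cases)
        obtain J j where J: "J' = J @ [j]" "length J = m"
          using True by (metis snoc_cases)
        have "?P' (x * y) I' J' = \<psi> (\<Sum>K\<in>?T. ?P x I K * ?P y K J) i j"
          using I J by (simp add: IH.pmul)
        also have "\<dots> = (\<Sum>K\<in>?T. \<Sum>k<n. \<psi> (?P x I K) i k * \<psi> (?P y K J) k j)"
          by (simp add: \<psi>sum \<psi>mul)
        also have "\<dots> = (\<Sum>K\<in>?T. \<Sum>k<n. ?P' x I' (K @ [k]) * ?P' y (K @ [k]) J')"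
          using I J lenT by (intro sum.cong refl) simp
        also have "\<dots> = (\<Sum>K'\<in>?T'. ?P' x I' K' * ?P' y K' J')"
          by (rule sum_multi_idx_Suc[symmetric])
        finally show ?thesis .
      qed
      show "bij_betw ?P' UNIV (TM ?T')"
        unfolding bij_betw_def
      proof
        show "inj ?P'"
        proof (rule injI)
          fix x y assume xy: "?P' x = ?P' y"
          have "?P x I J = ?P y I J" for I J
          proof (cases "length I = m \<and> length J = m")
            case True
            have "\<psi> (?P x I J) = \<psi> (?P y I J)"
            proof (intro ext)
              fix i j
              have "?P' x (I @ [i]) (J @ [j]) = ?P' y (I @ [i]) (J @ [j])" using xy by simp
              then show "\<psi> (?P x I J) i j = \<psi> (?P y I J) i j" using True by simp
            qed
            then show ?thesis by (rule \<psi>inj)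
          next
            case False
            then show ?thesis using IH.pout len_not_in by metis
          qed
          then show "x = y" by (rule IH.pinj)
        qed
        show "range ?P' = TM ?T'"
        proof
          show "range ?P' \<subseteq> TM ?T'"
          proof (rule subsetI)
            fix Z assume "Z \<in> range ?P'"
            then obtain x where Z: "Z = ?P' x" by blast
            have "I' \<in> ?T' \<and> J' \<in> ?T'" if nz: "?P' x I' J' \<noteq> 0" for I' J'
            proof -
            from nz have L: "length I' = Suc m \<and> length J' = Suc m" using psi_pow_out by blast
            obtain I i where I: "I' = I @ [i]" "length I = m"
              using L by (metis snoc_cases)
            obtain J j where J: "J' = J @ [j]" "length J = m"
              using L by (metis snoc_cases)
            have nz2: "\<psi> (?P x I J) i j \<noteq> 0" using nz I J by simp
            then have ij: "i < n \<and> j < n" by (rule \<psi>out)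
            have "?P x I J \<noteq> 0" using nz2 \<psi>0 by auto
            then have "I \<in> ?T \<and> J \<in> ?T" using IH.pout by blast
            then show "I' \<in> ?T' \<and> J' \<in> ?T'" using I J ij snoc_in by simp
            qed
            then show "Z \<in> TM ?T'" unfolding TM_def Z by blast
          qed
          show "TM ?T' \<subseteq> range ?P'"
          proof
            fix X :: "nat list \<Rightarrow> nat list \<Rightarrow> 'b" assume X: "X \<in> TM ?T'"
            define Y where "Y = (\<lambda>I J. if I \<in> ?T \<and> J \<in> ?T then inv_into UNIV \<psi> (\<lambda>i j. X (I @ [i]) (J @ [j])) else 0)"
            have Yev: "\<psi> (Y I J) = (\<lambda>i j. X (I @ [i]) (J @ [j]))" if "I \<in> ?T" "J \<in> ?T" for I J
            proof -
              have "(\<lambda>i j. X (I @ [i]) (J @ [j])) \<in> mats n"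
                unfolding mats_def using X TM_zero snoc_in by fastforce
              then have "(\<lambda>i j. X (I @ [i]) (J @ [j])) \<in> range \<psi>" using bij\<psi> by (simp add: bij_betw_def)
              then show ?thesis using that by (simp add: Y_def f_inv_into_f)
            qed
            have YT: "Y \<in> TM ?T" by (rule TM_I) (auto simp: Y_def)
            then obtain b where b: "?P b = Y" using IH.bij by (metis bij_betw_def imageE)
            have "?P' b = X"
            proof (intro ext)
              fix I' J'
              show "?P' b I' J' = X I' J'"
              proof (cases "length I' = Suc m \<and> length J' = Suc m")
                case False
                then have "I' \<notin> ?T' \<or> J' \<notin> ?T'" using len_not_in by blast
                moreover have "?P' b I' J' = 0" by (rule psi_pow_out) (use False in blast)
                ultimately show ?thesis using X by (simp add: TM_zero)
              next
                case True
                obtain I i where I: "I' = I @ [i]" "length I = m"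
                  using True by (metis snoc_cases)
                obtain J j where J: "J' = J @ [j]" "length J = m"
                  using True by (metis snoc_cases)
                show ?thesis
                proof (cases "I \<in> ?T \<and> J \<in> ?T")
                  case True
                  then show ?thesis using I J b Yev by simp
                next
                  case False
                  then have "Y I J = 0" using False by (auto simp: Y_def)
                  moreover have "I' \<notin> ?T' \<or> J' \<notin> ?T'" using False I J snoc_in by auto
                  ultimately show ?thesis using I J b X \<psi>0 by (simp add: TM_zero)
                qed
              qed
            qed
            then show "X \<in> range ?P'" by blast
          qed
        qed
      qed
    qed
  qed
qed

theorem proposition3p9:
  fixes n :: nat
    and \<psi> :: "'b::unital_cstar_algebra \<Rightarrow> nat \<Rightarrow> nat \<Rightarrow> 'b"
    and A :: "'b set"
    and \<phi> :: "'b \<Rightarrow> complex"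
  assumes "star_iso_Mn n \<psi>"
    and "\<And>i j. \<psi> 1 i j = (if i = j \<and> i < n then 1 else 0)"
    and "maximal_abelian_star_subalgebra A"
    and "unital_hom_on A \<phi>"
    and "positive_contraction \<phi>"
  shows "\<forall>c\<in>Calg n \<psi>. \<forall>\<epsilon>>0. \<exists>m\<ge>1. norm (kappa \<psi> m (phi_pow \<psi> \<phi> m c) - c) < \<epsilon>"
proof -
  have bij\<psi>: "bij_betw \<psi> UNIV (mats n)" using assms(1) by (simp add: star_iso_Mn_def)
  have npos: "n > 0"
  proof (rule ccontr)
    assume "\<not> n > 0"
    then have n0: "n = 0" by simp
    have "\<psi> x = (\<lambda>i j. 0)" for x
    proof -
      have "\<psi> x \<in> mats n" using bij\<psi> by (auto simp: bij_betw_def)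
      then show ?thesis using n0 by (auto simp: mats_def intro!: ext)
    qed
    then have "\<psi> 1 = \<psi> 0" by simp
    then have "(1::'b) = 0" using bij\<psi> unfolding bij_betw_def inj_def by blast
    then show False by simp
  qed
  have fadd: "\<phi> (x + y) = \<phi> x + \<phi> y" for x y using assms(5) by (simp add: positive_contraction_def)
  have fscl: "\<phi> (cs_scale a x) = a * \<phi> x" for a x using assms(5) by (simp add: positive_contraction_def)
  have fpos: "\<phi> (cs_star x * x) \<in> \<real> \<and> Re (\<phi> (cs_star x * x)) \<ge> 0" for x
    using assms(5) by (simp add: positive_contraction_def)
  have fone: "\<phi> 1 = 1" using assms(4) by (simp add: unital_hom_on_def)
  have M: "mip (multi_idx n m) (psi_pow \<psi> m) \<phi>" for m
  proof (rule mip.intro)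
    show "mi (multi_idx n m) (psi_pow \<psi> m)" by (rule psi_pow_mi[OF assms(1) assms(2) npos])
    show "mip_axioms \<phi>" by (rule mip_axioms.intro) (use fadd fscl fpos fone in auto)
  qed
  show ?thesis
  proof (intro ballI allI impI)
    fix c \<epsilon> assume c: "c \<in> Calg n \<psi>" and e: "(\<epsilon>::real) > 0"
    have "\<exists>y\<in>(\<Union>m\<in>{1..}. kappa \<psi> m ` tmats n m). dist y c < \<epsilon> / 5"
    proof -
      have "\<epsilon> / 5 > 0" using e by simp
      then show ?thesis using c unfolding Calg_def closure_approachable by blast
    qed
    then obtain k x where k: "k \<ge> 1" and x: "x \<in> tmats n k" and d: "dist (kappa \<psi> k x) c < \<epsilon> / 5"
      by auto
    interpret K: mip "multi_idx n k" "psi_pow \<psi> k" \<phi> by (rule M)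
    have kk: "kappa \<psi> k = K.kap" by (intro ext) (simp add: kappa_def K.kap_def K.sc_def)
    have pp: "phi_pow \<psi> \<phi> k = K.phiM" by (intro ext) (simp add: phi_pow_def K.phiM_def)
    have xT: "x \<in> TM (multi_idx n k)" using x by (simp add: tmats_def TM_def)
    define c' where "c' = K.kap x"
    have Ec': "K.E c' = c'" unfolding c'_def by (rule K.E_kap[OF xT])
    have dc: "norm (c' - c) < \<epsilon> / 5" using d by (simp add: c'_def kk dist_norm)
    have eq: "K.E c - c = K.E (c - c') + (c' - c)"
      using K.E_diff[of c c'] Ec' by (simp add: algebra_simps)
    have "norm (K.E c - c) \<le> norm (K.E (c - c')) + norm (c' - c)"
      unfolding eq by (rule norm_triangle_ineq)
    also have "\<dots> \<le> 4 * norm (c - c') + norm (c' - c)"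
      using K.E_bound[of "c - c'"] by simp
    also have "\<dots> = 5 * norm (c' - c)" by (simp add: norm_minus_commute)
    also have "\<dots> < \<epsilon>" using dc by simp
    finally have "norm (kappa \<psi> k (phi_pow \<psi> \<phi> k c) - c) < \<epsilon>"
      by (simp add: kk pp K.E_def)
    then show "\<exists>m\<ge>1. norm (kappa \<psi> m (phi_pow \<psi> \<phi> m c) - c) < \<epsilon>" using k by blast
  qed
qed

end
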